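(* Let $c>0$ and let $r\geq 1$ be an integer. If $N\geq 1$ and $r-1\leq c\log N$, then $$ \sum_{a\leq N}\tau_r(a)\leq \frac{(1+c)^{r-1}}{(r-1)!}\,N(\log N)^{r-1}. $$
   Context: $a$ runs over positive integers. For an integer $r\geq1$, $\tau_r(a)$ is the number of ways to write $a$ as an ordered product of $r$ positive integers. *)

theory Defs
  imports Complex_Main
begin

definition tau :: "nat \<Rightarrow> nat \<Rightarrow> nat" where
  "tau r a = card {xs :: nat list. length xs = r \<and> (\<forall>x\<in>set xs. 0 < x) \<and> prod_list xs = a}"

end

theory Submission
  imports Defs
begin

definition T :: "nat \<Rightarrow> nat \<Rightarrow> nat list set" where
  "T r n = {xs. length xs = r \<and> (\<forall>x\<in>set xs. 0 < x) \<and> prod_list xs \<le> n}"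

lemma pos_prod: "(\<forall>x\<in>set xs. 0 < (x::nat)) \<Longrightarrow> 0 < prod_list xs \<and> (\<forall>x\<in>set xs. x \<le> prod_list xs)"
proof (induction xs)
  case Nil then show ?case by simp
next
  case (Cons a xs)
  have "prod_list xs \<le> a * prod_list xs" using Cons by simp
  then show ?case using Cons by (auto intro: order_trans)
qed

lemma T_finite: "finite (T r n)"
proof -
  have "T r n \<subseteq> {xs. set xs \<subseteq> {1..n} \<and> length xs = r}"
    using pos_prod unfolding T_def by (fastforce simp: Suc_le_eq)
  then show ?thesis using finite_lists_length_eq[of "{1..n}" r] finite_subset by blast
qed

lemma T_Suc: "T (Suc r) n = (\<Union>m\<in>{1..n}. (Cons m) ` T r (n div m))"
proof (rule set_eqI, rule iffI)
  fix xs assume "xs \<in> T (Suc r) n"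
  then obtain m ys where xs: "xs = m # ys" and l: "length ys = r" and m: "0 < m"
    and ys: "\<forall>x\<in>set ys. 0 < x" and p: "m * prod_list ys \<le> n"
    unfolding T_def by (cases xs) auto
  have p1: "1 \<le> prod_list ys" using pos_prod[OF ys] by simp
  have "m \<le> n" using p p1 by (metis mult.right_neutral mult_le_mono2 order_trans)
  moreover have "prod_list ys \<le> n div m" using p m
    by (metis div_le_mono mult.commute nonzero_mult_div_cancel_right not_less0 gr_implies_not0)
  ultimately show "xs \<in> (\<Union>m\<in>{1..n}. (Cons m) ` T r (n div m))"
    using xs l m ys unfolding T_def by auto
next
  fix xs assume "xs \<in> (\<Union>m\<in>{1..n}. (Cons m) ` T r (n div m))"
  then obtain m ys where xs: "xs = m # ys" and m: "1 \<le> m" "m \<le> n" and ys: "ys \<in> T r (n div m)" by auto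
  have "m * prod_list ys \<le> m * (n div m)" using ys unfolding T_def by auto
  also have "\<dots> \<le> n" by simp
  finally show "xs \<in> T (Suc r) n" using xs m ys unfolding T_def by auto
qed

lemma card_T_Suc: "card (T (Suc r) n) = (\<Sum>m\<in>{1..n}. card (T r (n div m)))"
proof -
  have "card (T (Suc r) n) = (\<Sum>m\<in>{1..n}. card ((Cons m) ` T r (n div m)))"
    unfolding T_Suc by (rule card_UN_disjoint) (auto simp: T_finite)
  also have "\<dots> = (\<Sum>m\<in>{1..n}. card (T r (n div m)))"
    by (intro sum.cong refl card_image) auto
  finally show ?thesis .
qed

lemma card_T0: "card (T 0 j) = (if 1 \<le> j then 1 else 0)"
proof -
  have "T 0 j = (if 1 \<le> j then {[]} else {})" unfolding T_def by auto
  then show ?thesis by simp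
qed

lemma sum_tau: "(\<Sum>a\<in>{1..n}. tau r a) = card (T r n)"
proof -
  have eq: "T r n = (\<Union>a\<in>{1..n}. {xs. length xs = r \<and> (\<forall>x\<in>set xs. 0 < x) \<and> prod_list xs = a})"
    unfolding T_def using pos_prod by (fastforce simp: Suc_le_eq)
  have fin: "finite {xs. length xs = r \<and> (\<forall>x\<in>set xs. 0 < x) \<and> prod_list xs = a}" if "a \<in> {1..n}" for a
    using that by (intro finite_subset[OF _ T_finite[of r n]]) (auto simp: T_def)
  show ?thesis unfolding eq tau_def
    by (subst card_UN_disjoint) (auto simp: fin)
qed

lemma key_ineq:
  fixes P Q :: real assumes "0 \<le> Q" "Q \<le> P"
  shows "real (Suc k) * (P - Q) * Q ^ k \<le> P ^ Suc k - Q ^ Suc k"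
proof (induction k)
  case 0 then show ?case by simp
next
  case (Suc k)
  have "real (Suc (Suc k)) * (P - Q) * Q ^ Suc k = Q * (real (Suc k) * (P - Q) * Q ^ k) + (P - Q) * Q ^ Suc k"
    by (simp add: algebra_simps)
  also have "\<dots> \<le> P * (real (Suc k) * (P - Q) * Q ^ k) + (P - Q) * Q ^ Suc k"
    using assms by (intro add_right_mono mult_right_mono) auto
  also have "\<dots> \<le> P * (P ^ Suc k - Q ^ Suc k) + (P - Q) * Q ^ Suc k"
    using Suc assms by (intro add_right_mono mult_left_mono) auto
  also have "\<dots> = P ^ Suc (Suc k) - Q ^ Suc (Suc k)"
    by (simp add: algebra_simps)
  finally show ?case .
qed

lemma ln_step: "n \<ge> 1 \<Longrightarrow> 1 / real (Suc n) \<le> ln (real (Suc n)) - ln (real n)"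
proof -
  assume n: "n \<ge> 1"
  have "ln (real n / real (Suc n)) \<le> real n / real (Suc n) - 1"
    using n by (intro ln_le_minus_one) auto
  also have "\<dots> = - (1 / real (Suc n))" by (simp add: field_simps)
  finally show ?thesis using n by (simp add: ln_div)
qed

lemma harm_sum:
  fixes A :: real
  assumes "n \<ge> 1" "ln (real n) \<le> A"
  shows "(\<Sum>m\<in>{1..n}. (A - ln (real m)) ^ k / real m)
         \<le> A ^ k + (A ^ Suc k - (A - ln (real n)) ^ Suc k) / real (Suc k)"
  using assms
proof (induction n rule: dec_induct)
  case base then show ?case by simp
next
  case (step n)
  have ln1: "ln (real n) \<le> ln (real (Suc n))" using step by simp
  define P where "P = A - ln (real n)"
  define Q where "Q = A - ln (real (Suc n))"
  have Q0: "0 \<le> Q" "Q \<le> P" using step ln1 by (auto simp: P_def Q_def)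
  have IH: "(\<Sum>m\<in>{1..n}. (A - ln (real m)) ^ k / real m)
         \<le> A ^ k + (A ^ Suc k - P ^ Suc k) / real (Suc k)"
    using step ln1 by (auto simp: P_def)
  have "(P - Q) * Q ^ k \<ge> (1 / real (Suc n)) * Q ^ k"
    using ln_step[OF step(1)] Q0 by (intro mult_right_mono) (auto simp: P_def Q_def)
  moreover have "(P - Q) * Q ^ k \<le> (P ^ Suc k - Q ^ Suc k) / real (Suc k)"
    using key_ineq[OF Q0, of k] by (subst pos_le_divide_eq) (auto simp: algebra_simps)
  ultimately have "Q ^ k / real (Suc n) \<le> (P ^ Suc k - Q ^ Suc k) / real (Suc k)"
    by simp
  hence "(A - ln (real (Suc n))) ^ k / real (Suc n) \<le> (P ^ Suc k - Q ^ Suc k) / real (Suc k)"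
    by (simp add: Q_def)
  hence last: "Q ^ k / real (Suc n) \<le> (P ^ Suc k - Q ^ Suc k) / real (Suc k)" by (simp add: Q_def)
  have eq: "(\<Sum>m\<in>{1..Suc n}. (A - ln (real m)) ^ k / real m) = (\<Sum>m\<in>{1..n}. (A - ln (real m)) ^ k / real m) + Q ^ k / real (Suc n)"
    by (simp add: sum.cl_ivl_Suc Q_def)
  have tel: "(A ^ Suc k - P ^ Suc k) / real (Suc k) + (P ^ Suc k - Q ^ Suc k) / real (Suc k) = (A ^ Suc k - Q ^ Suc k) / real (Suc k)"
    by (simp add: diff_divide_distrib)
  show ?case unfolding eq Q_def[symmetric] using IH last tel by linarith
qed

lemma main_bound:
  fixes x :: real assumes "x \<ge> 1"
  shows "real (card (T (Suc k) (nat \<lfloor>x\<rfloor>))) \<le> x * (ln x + real k) ^ k / fact k"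
  using assms
proof (induction k arbitrary: x)
  case 0
  have "card (T 1 (nat \<lfloor>x\<rfloor>)) = nat \<lfloor>x\<rfloor>"
  proof -
    have "card (T 1 (nat \<lfloor>x\<rfloor>)) = (\<Sum>m\<in>{1..nat \<lfloor>x\<rfloor>}. 1)"
      using card_T_Suc[of 0 "nat \<lfloor>x\<rfloor>"] unfolding card_T0
      by (auto simp: div_greater_zero_iff Suc_le_eq intro!: sum.cong)
    then show ?thesis by simp
  qed
  then show ?case using 0 by simp
next
  case (Suc k)
  define n where "n = nat \<lfloor>x\<rfloor>"
  define A where "A = ln x + real k"
  have n1: "n \<ge> 1" using Suc.prems by (simp add: n_def le_nat_iff)
  have nx: "real n \<le> x" using Suc.prems by (simp add: n_def)
  have lnn: "ln (real n) \<le> ln x" using n1 nx by simp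
  have "real (card (T (Suc (Suc k)) n)) = (\<Sum>m\<in>{1..n}. real (card (T (Suc k) (n div m))))"
    by (simp add: card_T_Suc)
  also have "\<dots> \<le> (\<Sum>m\<in>{1..n}. (x / real m) * (ln (x / real m) + real k) ^ k / fact k)"
  proof (rule sum_mono)
    fix m assume m: "m \<in> {1..n}"
    have "nat \<lfloor>x / real m\<rfloor> = n div m"
      using floor_divide_real_eq_div[of "int m" x] Suc.prems
      by (simp add: n_def nat_div_distrib)
    moreover have "x / real m \<ge> 1" using m nx by simp
    ultimately show "real (card (T (Suc k) (n div m))) \<le> (x / real m) * (ln (x / real m) + real k) ^ k / fact k"
      using Suc.IH[of "x / real m"] by simp
  qed
  also have "\<dots> = x / fact k * (\<Sum>m\<in>{1..n}. (A - ln (real m)) ^ k / real m)"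
    unfolding sum_distrib_left
  proof (rule sum.cong[OF refl])
    fix m assume m: "m \<in> {1..n}"
    have lnx: "ln (x / real m) = ln x - ln (real m)" using m Suc.prems by (simp add: ln_div)
    show "(x / real m) * (ln (x / real m) + real k) ^ k / fact k =
      x / fact k * ((A - ln (real m)) ^ k / real m)" unfolding lnx by (simp add: A_def algebra_simps)
  qed
  also have "\<dots> \<le> x / fact k * (A ^ k + A ^ Suc k / real (Suc k))"
  proof (rule mult_left_mono)
    have A0: "ln (real n) \<le> A" using lnn by (simp add: A_def)
    have "0 \<le> (A - ln (real n)) ^ Suc k" using A0 by simp
    then have "(A ^ Suc k - (A - ln (real n)) ^ Suc k) / real (Suc k) \<le> A ^ Suc k / real (Suc k)"
      by (intro divide_right_mono) auto
    then show "(\<Sum>m\<in>{1..n}. (A - ln (real m)) ^ k / real m) \<le> A ^ k + A ^ Suc k / real (Suc k)"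
      using harm_sum[OF n1 A0, of k] by linarith
  qed (use Suc.prems in auto)
  also have "\<dots> \<le> x / fact k * ((A + 1) ^ Suc k / real (Suc k))"
  proof (rule mult_left_mono)
    have "A \<ge> 0" using Suc.prems by (simp add: A_def)
    then have "real (Suc k) * ((A+1) - A) * A ^ k \<le> (A+1) ^ Suc k - A ^ Suc k"
      by (intro key_ineq) auto
    then have "A ^ k \<le> ((A+1) ^ Suc k - A ^ Suc k) / real (Suc k)"
      by (subst pos_le_divide_eq) (auto simp: mult.commute)
    moreover have "((A+1) ^ Suc k - A ^ Suc k) / real (Suc k) = (A+1) ^ Suc k / real (Suc k) - A ^ Suc k / real (Suc k)"
      by (rule diff_divide_distrib)
    ultimately show "A ^ k + A ^ Suc k / real (Suc k) \<le> (A + 1) ^ Suc k / real (Suc k)"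
      by linarith
  qed (use Suc.prems in auto)
  also have "\<dots> = x * (ln x + real (Suc k)) ^ Suc k / fact (Suc k)"
    by (simp add: A_def field_simps)
  finally show ?case by (simp add: n_def)
qed

theorem corollary2p1:
  fixes c N :: real and r :: nat
  assumes "c > 0" and "r \<ge> 1" and "N \<ge> 1"
    and "real (r - 1) \<le> c * ln N"
  shows "real (\<Sum>a\<in>{1..nat \<lfloor>N\<rfloor>}. tau r a)
           \<le> (1 + c) ^ (r - 1) / fact (r - 1) * N * (ln N) ^ (r - 1)"
proof -
  define k where "k = r - 1"
  have r: "r = Suc k" using assms(2) by (simp add: k_def)
  have L0: "0 \<le> ln N" using assms(3) by simp
  have "real (\<Sum>a\<in>{1..nat \<lfloor>N\<rfloor>}. tau r a) = real (card (T (Suc k) (nat \<lfloor>N\<rfloor>)))"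
    unfolding sum_tau r by (rule refl)
  also have "\<dots> \<le> N * (ln N + real k) ^ k / fact k" by (rule main_bound[OF assms(3)])
  also have "\<dots> \<le> N * ((1 + c) * ln N) ^ k / fact k"
  proof -
    have "(ln N + real k) ^ k \<le> ((1 + c) * ln N) ^ k"
      using assms(4) L0 by (intro power_mono) (auto simp: k_def algebra_simps)
    then show ?thesis using assms(3) by (intro divide_right_mono mult_left_mono) auto
  qed
  also have "\<dots> = (1 + c) ^ (r - 1) / fact (r - 1) * N * (ln N) ^ (r - 1)"
    by (simp add: k_def power_mult_distrib)
  finally show ?thesis .
qed

end
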